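(* Every $3$-uniform bi-hypergraph with exactly $6$ vertices and at most $9$ edges is colorable. Consequently $\ell(6,3)\ge 10$.
   Context: A bi-hypergraph $\mathcal H=(V,E)$ consists of a finite vertex set $V$ and a set $E$ of subsets of $V$, called edges, with no edge contained in another. It is $r$-uniform if every edge has exactly $r$ elements. A mapping $f:V\to\mathbb N$ is a proper coloring of $\mathcal H$ if $1<|f(e)|<|e|$ for every $e\in E$, where $f(e)=\{f(v):v\in e\}$. $\mathcal H$ is colorable if it has a proper coloring, and uncolorable otherwise. A subhypergraph of $\mathcal H$ is a bi-hypergraph $(V',E')$ with $V'\subseteq V$, $E'\subseteq E$. $\mathcal H$ is minimal uncolorable if it is uncolorable but every proper subhypergraph of it is colorable. $\ell(n,r)$ is the minimum number of edges of a minimal uncolorable $r$-uniform bi-hypergraph with exactly $n$ vertices ($\infty$ if none exists). *)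

theory Defs
  imports Main "HOL-Library.Extended_Nat"
begin

definition bihypergraph :: "'a set \<Rightarrow> 'a set set \<Rightarrow> bool" where
  "bihypergraph V E \<longleftrightarrow> finite V \<and> (\<forall>e\<in>E. e \<subseteq> V)
     \<and> (\<forall>e\<in>E. \<forall>e'\<in>E. e \<subseteq> e' \<longrightarrow> e = e')"

definition uniform :: "nat \<Rightarrow> 'a set set \<Rightarrow> bool" where
  "uniform r E \<longleftrightarrow> (\<forall>e\<in>E. card e = r)"

definition proper_coloring :: "'a set set \<Rightarrow> ('a \<Rightarrow> nat) \<Rightarrow> bool" where
  "proper_coloring E f \<longleftrightarrow> (\<forall>e\<in>E. 1 < card (f ` e) \<and> card (f ` e) < card e)"

definition colorable :: "'a set \<Rightarrow> 'a set set \<Rightarrow> bool" where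
  "colorable V E \<longleftrightarrow> (\<exists>f. proper_coloring E f)"

definition subhypergraph :: "'a set \<Rightarrow> 'a set set \<Rightarrow> 'a set \<Rightarrow> 'a set set \<Rightarrow> bool" where
  "subhypergraph V' E' V E \<longleftrightarrow> bihypergraph V' E' \<and> V' \<subseteq> V \<and> E' \<subseteq> E"

definition minimal_uncolorable :: "'a set \<Rightarrow> 'a set set \<Rightarrow> bool" where
  "minimal_uncolorable V E \<longleftrightarrow> bihypergraph V E \<and> \<not> colorable V E
     \<and> (\<forall>V' E'. subhypergraph V' E' V E \<and> (V', E') \<noteq> (V, E) \<longrightarrow> colorable V' E')"

text \<open>Vertices are taken from nat,
which is no loss of generality (isomorphism invariance).\<close>
definition ell :: "nat \<Rightarrow> nat \<Rightarrow> enat" where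
  "ell n r = Inf {enat (card E) | (V :: nat set) E.
      minimal_uncolorable V E \<and> uniform r E \<and> card V = n}"

end

theory Submission
  imports Defs
begin

lemma col6:
  fixes V :: "'a set"
  assumes bh: "bihypergraph V E" and u: "uniform 3 E" and cV: "card V = 6" and cE: "card E \<le> 9"
  shows "colorable V E"
proof -
  have fV: "finite V" using bh by (simp add: bihypergraph_def)
  have sub: "\<And>e. e \<in> E \<Longrightarrow> e \<subseteq> V" using bh by (simp add: bihypergraph_def)
  have c3: "\<And>e. e \<in> E \<Longrightarrow> card e = 3" using u by (simp add: uniform_def)
  define S where "S = {A. A \<subseteq> V \<and> card A = 3}"
  have cS: "card S = 20" unfolding S_def using n_subsets[OF fV, of 3] cV
    by (simp add: numeral_eq_Suc)
  have fE: "finite E"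
  proof -
    have "E \<subseteq> Pow V" using sub by blast
    thus ?thesis using fV finite_subset by blast
  qed
  define B where "B = E \<union> (\<lambda>e. V - e) ` E"
  have "card B \<le> card E + card ((\<lambda>e. V - e) ` E)" unfolding B_def by (rule card_Un_le)
  also have "\<dots> \<le> card E + card E" using card_image_le[OF fE] by simp
  finally have cB: "card B \<le> 18" using cE by simp
  have "\<not> S \<subseteq> B"
  proof
    assume "S \<subseteq> B"
    hence "card S \<le> card B" using fE B_def by (intro card_mono) auto
    thus False using cS cB by simp
  qed
  then obtain A where AS: "A \<in> S" and AB: "A \<notin> B" by blast
  have AV: "A \<subseteq> V" and cA: "card A = 3" using AS S_def by auto
  define f where "f = (\<lambda>x. if x \<in> A then 0 else (1::nat))"
  have "proper_coloring E f"
    unfolding proper_coloring_def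
  proof
    fix e assume eE: "e \<in> E"
    have ce: "card e = 3" using c3 eE by simp
    have fe: "finite e" using ce by (intro card_ge_0_finite) simp
    have "f ` e \<subseteq> {0,1}" unfolding f_def by auto
    hence "card (f ` e) \<le> card {0::nat,1}" by (intro card_mono) auto
    hence le2: "card (f ` e) \<le> 2" by simp
    have ne: "e \<noteq> A" using AB eE B_def by auto
    have ne2: "e \<noteq> V - A"
    proof
      assume "e = V - A"
      hence "A = V - e" using AV by auto
      thus False using AB eE B_def by auto
    qed
    have "\<not> e \<subseteq> A"
    proof
      assume "e \<subseteq> A"
      hence "e = A" using card_subset_eq[of A e] cA ce fe by (metis card.infinite zero_neq_numeral)
      thus False using ne by simp
    qed
    then obtain x where x: "x \<in> e" "x \<notin> A" by blast
    have "\<not> e \<subseteq> V - A"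
    proof
      assume h: "e \<subseteq> V - A"
      have "card (V - A) = 3" using cV cA AV fV card_Diff_subset[of A V] finite_subset[OF AV fV] by simp
      hence "e = V - A" using card_subset_eq[of "V - A" e] h ce fV by auto
      thus False using ne2 by simp
    qed
    then obtain y where y: "y \<in> e" "y \<in> A" using sub[OF eE] by blast
    have "{0,1} \<subseteq> f ` e" using x y unfolding f_def by force
    hence "card {0::nat,1} \<le> card (f ` e)" using fe by (intro card_mono) auto
    thus "1 < card (f ` e) \<and> card (f ` e) < card e" using le2 ce by simp
  qed
  thus ?thesis by (auto simp: colorable_def)
qed

theorem mainTheorem9:
  shows "(\<forall>(V :: 'a set) E. bihypergraph V E \<and> uniform 3 E \<and> card V = 6 \<and> card E \<le> 9
            \<longrightarrow> colorable V E) \<and> ell 6 3 \<ge> 10"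
proof
  show "\<forall>(V :: 'a set) E. bihypergraph V E \<and> uniform 3 E \<and> card V = 6 \<and> card E \<le> 9
            \<longrightarrow> colorable V E" using col6 by blast
  show "ell 6 3 \<ge> 10" unfolding ell_def
  proof (rule Inf_greatest)
    fix x assume "x \<in> {enat (card E) | (V :: nat set) E.
      minimal_uncolorable V E \<and> uniform 3 E \<and> card V = 6}"
    then obtain V :: "nat set" and E where x: "x = enat (card E)" and m: "minimal_uncolorable V E"
      and u: "uniform 3 E" and c: "card V = 6" by blast
    have "\<not> card E \<le> 9" using col6[of V E] m u c by (auto simp: minimal_uncolorable_def)
    hence "10 \<le> card E" by simp
    thus "10 \<le> x" using x by (simp add: numeral_eq_enat)
  qed
qed

end
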